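(* Let $\theta:\mathbb{A}\to\mathbb{A}^\lambda$ be a primitive substitution satisfying the standing assumptions, and let $\Theta=\theta\vee\widetilde\theta:\overline{\mathcal{X}}\to\overline{\mathcal{X}}^\lambda$. Then $\Theta$ is primitive and $h(\Theta)=h(\theta)$.
   Context: Substitution $\theta:\mathbb{A}\to\mathbb{A}^\lambda$, $\lambda\ge2$; primitive: some iterate $\theta^k(a)$ contains all letters for each $a$. Standing assumptions: $\theta(a_0)_0=a_0$, $\theta$ injective on letters, subshift infinite. Height of a primitive substitution $\zeta$: $h(\zeta)=\max\{m\ge1:\gcd(m,\lambda)=1,\ m\mid\gcd\{r\ge1:v[r]=v[0]\}\}$ where $v$ is a fixed point of a suitable power of $\zeta$ (independent of choices). Let $\mathcal{X}$ be the set of $M\subset\mathbb{A}$ with $|M|=c(\theta):=\min_{k\ge1,0\le j<\lambda^k}|\{\theta^k(a)_j:a\in\mathbb{A}\}|$ and $M=\{\theta^k(a)_j:a\in\mathbb{A}\}$ for some $k\ge1$, $0\le j<\lambda^k$; $\widetilde\theta:\mathcal{X}\to\mathcal{X}^\lambda$, $\widetilde\theta(M)_j=\{\theta(a)_j:a\in M\}$. Let $\overline{\mathcal{X}}=\{(a,M):M\in\mathcal{X},\ a\in M\}$ and $\Theta(a,M)_j=(\theta(a)_j,\widetilde\theta(M)_j)$ for $0\le j<\lambda$ (this maps $\overline{\mathcal{X}}$ into $\overline{\mathcal{X}}^\lambda$). *)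

theory Defs
  imports Main
begin

text \<open>A substitution of constant length lam on an alphabet is a function
  zeta :: 'b => nat => 'b, where zeta a j is the j-th letter of zeta(a), j < lam.
  The iterate zeta^k(a) is the word of length lam^k given by subst_iter.\<close>

primrec subst_iter :: "nat \<Rightarrow> ('b \<Rightarrow> nat \<Rightarrow> 'b) \<Rightarrow> nat \<Rightarrow> 'b \<Rightarrow> nat \<Rightarrow> 'b" where
  "subst_iter lam z 0 a j = a"
| "subst_iter lam z (Suc k) a j = z (subst_iter lam z k a (j div lam)) (j mod lam)"

definition primitive_on :: "'b set \<Rightarrow> nat \<Rightarrow> ('b \<Rightarrow> nat \<Rightarrow> 'b) \<Rightarrow> bool" where
  "primitive_on B lam z \<longleftrightarrow>
     (\<forall>a\<in>B. \<forall>j<lam. z a j \<in> B) \<and>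
     (\<exists>k\<ge>1. \<forall>a\<in>B. \<forall>b\<in>B. \<exists>j<lam ^ k. subst_iter lam z k a j = b)"

text \<open>Height: choose p >= 1 and a letter b with z^p(b)_0 = b; v is the one-sided fixed
  point of z^p starting with b, v[r] = z^(p(r+1))(b)_r.\<close>
definition height_on :: "'b set \<Rightarrow> nat \<Rightarrow> ('b \<Rightarrow> nat \<Rightarrow> 'b) \<Rightarrow> nat" where
  "height_on B lam z =
     (let (p, b) = (SOME (p, b). p \<ge> 1 \<and> b \<in> B \<and> subst_iter lam z p b 0 = b);
          v = (\<lambda>r. subst_iter lam z (p * (r + 1)) b r)
      in GREATEST m. m \<ge> 1 \<and> coprime m lam \<and> m dvd Gcd {r. r \<ge> 1 \<and> v r = v 0})"

definition subshift :: "nat \<Rightarrow> ('a \<Rightarrow> nat \<Rightarrow> 'a) \<Rightarrow> (int \<Rightarrow> 'a) set" where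
  "subshift lam th = {x. \<forall>i::int. \<forall>n::nat. \<exists>k a s. s + n \<le> lam ^ k \<and>
        (\<forall>t<n. subst_iter lam th k a (s + t) = x (i + int t))}"

definition col_card :: "nat \<Rightarrow> ('a \<Rightarrow> nat \<Rightarrow> 'a) \<Rightarrow> nat" where
  "col_card lam th = Min {card ((\<lambda>a. subst_iter lam th k a j) ` UNIV) | k j. k \<ge> 1 \<and> j < lam ^ k}"

definition Xcal :: "nat \<Rightarrow> ('a \<Rightarrow> nat \<Rightarrow> 'a) \<Rightarrow> 'a set set" where
  "Xcal lam th = {M. card M = col_card lam th \<and>
      (\<exists>k\<ge>1. \<exists>j<lam ^ k. M = (\<lambda>a. subst_iter lam th k a j) ` UNIV)}"

definition theta_tilde :: "('a \<Rightarrow> nat \<Rightarrow> 'a) \<Rightarrow> 'a set \<Rightarrow> nat \<Rightarrow> 'a set" where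
  "theta_tilde th M j = (\<lambda>a. th a j) ` M"

definition Xbar :: "nat \<Rightarrow> ('a \<Rightarrow> nat \<Rightarrow> 'a) \<Rightarrow> ('a \<times> 'a set) set" where
  "Xbar lam th = {(a, M). M \<in> Xcal lam th \<and> a \<in> M}"

definition Theta :: "('a \<Rightarrow> nat \<Rightarrow> 'a) \<Rightarrow> ('a \<times> 'a set) \<Rightarrow> nat \<Rightarrow> ('a \<times> 'a set)" where
  "Theta th aM j = (th (fst aM) j, theta_tilde th (snd aM) j)"

end

theory Submission
  imports Defs
begin


lemma si_add:
  assumes "0 < lam"
  shows "subst_iter lam z (k1 + k2) a j =
    subst_iter lam z k1 (subst_iter lam z k2 a (j div lam ^ k1)) (j mod lam ^ k1)"
proof (induction k1 arbitrary: j)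
  case 0
  then show ?case by simp
next
  case (Suc k1)
  have d: "j div lam div lam ^ k1 = j div lam ^ Suc k1"
    by (simp add: div_mult2_eq)
  have m1: "j mod (lam * lam ^ k1) div lam = j div lam mod lam ^ k1"
    using assms by (simp add: mod_mult2_eq)
  have m2: "j mod (lam * lam ^ k1) mod lam = j mod lam"
    by (metis mod_mod_cancel dvd_triv_left)
  show ?case using Suc by (simp add: d m1 m2)
qed

lemma si_closed:
  assumes "\<forall>a\<in>B. \<forall>j<lam. z a j \<in> B" "0 < lam" "c \<in> B"
  shows "subst_iter lam z k c j \<in> B"
  using assms by (induction k arbitrary: j) auto

lemma idx_bound:
  fixes a b l :: nat
  assumes "a < l ^ A" "b < l ^ B"
  shows "a * l ^ B + b < l ^ (A + B)"
proof -
  have "a * l ^ B + b < (a + 1) * l ^ B" using assms(2) by simp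
  also have "\<dots> \<le> l ^ A * l ^ B" using assms(1) by (intro mult_right_mono) auto
  finally show ?thesis by (simp add: power_add)
qed

lemma prim_mono:
  assumes "primitive_on B lam z" "0 < lam"
  shows "\<exists>K\<ge>1. \<forall>n\<ge>K. \<forall>a\<in>B. \<forall>c\<in>B. \<exists>t<lam ^ n. subst_iter lam z n a t = c"
proof -
  from assms(1) obtain K where K: "K \<ge> 1"
    "\<forall>a\<in>B. \<forall>b\<in>B. \<exists>j<lam ^ K. subst_iter lam z K a j = b"
    and cl: "\<forall>a\<in>B. \<forall>j<lam. z a j \<in> B"
    unfolding primitive_on_def by blast
  have "\<exists>t<lam ^ n. subst_iter lam z n a t = c" if "n \<ge> K" "a \<in> B" "c \<in> B" for n a c
  proof -
    define a' where "a' = subst_iter lam z (n - K) a 0"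
    have "a' \<in> B" unfolding a'_def using si_closed[OF cl assms(2) \<open>a\<in>B\<close>] .
    then obtain t where t: "t < lam ^ K" "subst_iter lam z K a' t = c" using K(2) \<open>c \<in> B\<close> by blast
    have "subst_iter lam z (K + (n - K)) a t =
       subst_iter lam z K (subst_iter lam z (n - K) a (t div lam ^ K)) (t mod lam ^ K)"
      by (rule si_add[OF assms(2)])
    also have "t div lam ^ K = 0" using t(1) by simp
    also have "t mod lam ^ K = t" using t(1) by simp
    finally have e: "subst_iter lam z (K + (n - K)) a t = subst_iter lam z K a' t"
      unfolding a'_def .
    have n: "K + (n - K) = n" using that(1) by simp
    have "lam ^ K \<le> lam ^ n" using assms(2) that(1) by (intro power_increasing) auto
    then show ?thesis using t e n by (intro exI[of _ t]) auto
  qed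
  then show ?thesis using K(1) by (intro exI[of _ K]) auto
qed

lemma fix0:
  assumes "0 < lam" "subst_iter lam z p b 0 = b"
  shows "subst_iter lam z (p * n) b 0 = b"
proof (induction n)
  case 0 then show ?case by simp
next
  case (Suc n)
  have "subst_iter lam z (p * Suc n) b 0 = subst_iter lam z (p + p * n) b 0" by simp
  also have "\<dots> = b" unfolding si_add[OF assms(1)] using Suc assms by simp
  finally show ?case .
qed

lemma prefix:
  assumes "0 < lam" "subst_iter lam z p b 0 = b" "n1 \<le> n2" "y < lam ^ (p * n1)"
  shows "subst_iter lam z (p * n2) b y = subst_iter lam z (p * n1) b y"
proof -
  have "p * n2 = p * n1 + p * (n2 - n1)" using assms(3) by (simp add: diff_mult_distrib2)
  then have "subst_iter lam z (p * n2) b y =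
     subst_iter lam z (p * n1) (subst_iter lam z (p * (n2 - n1)) b (y div lam ^ (p * n1))) (y mod lam ^ (p * n1))"
    using si_add[OF assms(1)] by metis
  also have "\<dots> = subst_iter lam z (p * n1) b y"
    using assms fix0[OF assms(1,2)] by simp
  finally show ?thesis .
qed

lemma lt_pow:
  assumes "2 \<le> lam" "1 \<le> p"
  shows "r < lam ^ (p * (r + 1))"
proof -
  have "r * 1 \<le> r * p" using assms(2) by (rule mult_le_mono2)
  then have "r \<le> p * r" by (simp add: mult.commute)
  moreover have "p * r \<le> p * (r + 1)" by simp
  ultimately have "r \<le> p * (r + 1)" by (rule order_trans)
  then have 3: "lam ^ r \<le> lam ^ (p * (r + 1))" using assms
    by (intro power_increasing) auto
  have "r < 2 ^ r" by (rule less_exp)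
  also have "(2::nat) ^ r \<le> lam ^ r" using assms by (simp add: power_mono)
  also note 3
  finally show ?thesis .
qed

lemma cancel:
  assumes "coprime m lam" "int m dvd (a::int) * int lam ^ n"
  shows "int m dvd a"
proof -
  have "coprime (int m) (int lam ^ n)"
    using assms(1) by (simp add: coprime_int_iff coprime_power_right_iff)
  then show ?thesis using assms(2) coprime_dvd_mult_left_iff by blast
qed



lemma dm_div: "t < (m::nat) \<Longrightarrow> (a * m + t) div m = a"
proof -
  assume h: "t < m"
  then have "m \<noteq> 0" by auto
  then have "(t + a * m) div m = a + t div m" by (rule div_mult_self1)
  with h show ?thesis by (simp add: add.commute)
qed

lemma dm_mod: "t < (m::nat) \<Longrightarrow> (a * m + t) mod m = t"
proof -
  assume h: "t < m"
  have "(t + a * m) mod m = t mod m" by (rule mod_mult_self1)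
  with h show ?thesis by (simp add: add.commute)
qed

definition Pm :: "'b set \<Rightarrow> nat \<Rightarrow> ('b \<Rightarrow> nat \<Rightarrow> 'b) \<Rightarrow> nat \<Rightarrow> bool" where
  "Pm B lam z m \<longleftrightarrow> (\<forall>k. \<forall>c\<in>B. \<forall>j<lam ^ k. \<forall>j'<lam ^ k.
     subst_iter lam z k c j = subst_iter lam z k c j' \<longrightarrow> int m dvd int j - int j')"

lemma dir_A:
  assumes lam: "2 \<le> lam" and prim: "primitive_on B lam z"
    and p1: "1 \<le> p" "b \<in> B" "subst_iter lam z p b 0 = b"
    and dv: "\<And>r. r \<ge> 1 \<Longrightarrow> subst_iter lam z (p * (r + 1)) b r = b \<Longrightarrow> m dvd r"
    and cop: "coprime m lam"
  shows "Pm B lam z m"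
proof -
  have l0: "0 < lam" using lam by simp
  have cl: "\<forall>a\<in>B. \<forall>j<lam. z a j \<in> B" using prim unfolding primitive_on_def by blast
  obtain K where K1: "K \<ge> 1" and
    K2: "\<forall>n\<ge>K. \<forall>a\<in>B. \<forall>c\<in>B. \<exists>t<lam ^ n. subst_iter lam z n a t = c"
    using prim_mono[OF prim l0] by blast
  note K = K1 K2[rule_format]
  have posb: "m dvd y" if "N \<ge> 1" "y < lam ^ (p * N)" "subst_iter lam z (p * N) b y = b" for N y
  proof (cases "y = 0")
    case True then show ?thesis by simp
  next
    case False
    define n1 where "n1 = min N (y + 1)"
    have y1: "y < lam ^ (p * (y + 1))" using lt_pow[OF lam p1(1)] .
    have yn1: "y < lam ^ (p * n1)" unfolding n1_def using that(2) y1
      by (cases "N \<le> y + 1") (auto simp: min_def)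
    have le1: "n1 \<le> y + 1" and le2: "n1 \<le> N" unfolding n1_def by auto
    have "subst_iter lam z (p * (y + 1)) b y = subst_iter lam z (p * n1) b y"
      by (rule prefix[OF l0 p1(3) le1 yn1])
    also have "\<dots> = subst_iter lam z (p * N) b y"
      by (rule prefix[OF l0 p1(3) le2 yn1, symmetric])
    finally have "subst_iter lam z (p * (y + 1)) b y = b" using that(3) by simp
    then show ?thesis using dv False by simp
  qed
  show ?thesis unfolding Pm_def
  proof (intro allI ballI impI)
    fix k c j j'
    assume c: "c \<in> B" and j: "j < lam ^ k" and j': "j' < lam ^ k"
      and eq: "subst_iter lam z k c j = subst_iter lam z k c j'"
    define d where "d = subst_iter lam z k c j"
    have dB: "d \<in> B" unfolding d_def using si_closed[OF cl l0 c] .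
    define e where "e = p * (k + K) - k"
    have hX: "k + K \<le> p * (k + K)" using p1(1) by simp
    have ke: "k + e = p * (k + K)" using hX unfolding e_def by arith
    have eK: "e \<ge> K" using hX unfolding e_def by arith
    obtain x where x: "x < lam ^ e" "subst_iter lam z e b x = c" using K(2)[OF eK p1(2) c] by blast
    have "p * K \<ge> K" using p1(1) by simp
    then obtain t where t: "t < lam ^ (p * K)" "subst_iter lam z (p * K) d t = b"
      using K(2)[OF _ dB p1(2)] by blast
    have gen: "m dvd ((x * lam ^ k + jj) * lam ^ (p * K) + t)"
      if jj: "jj < lam ^ k" "subst_iter lam z k c jj = d" for jj
    proof -
      define y where "y = (x * lam ^ k + jj) * lam ^ (p * K) + t"
      have b1: "x * lam ^ k + jj < lam ^ (e + k)" using idx_bound[OF x(1) jj(1)] .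
      have b2: "y < lam ^ ((e + k) + p * K)" unfolding y_def using idx_bound[OF b1 t(1)] .
      have pN: "p * (k + K + K) = p * K + (k + e)" using ke by (simp add: algebra_simps)
      have yd: "y div lam ^ (p * K) = x * lam ^ k + jj" unfolding y_def using t(1) by (simp only: dm_div dm_mod)
      have ym: "y mod lam ^ (p * K) = t" unfolding y_def using t(1) by (simp only: dm_div dm_mod)
      have "subst_iter lam z (p * K + (k + e)) b y =
          subst_iter lam z (p * K) (subst_iter lam z (k + e) b (y div lam ^ (p * K))) (y mod lam ^ (p * K))"
        by (rule si_add[OF l0])
      also have "subst_iter lam z (k + e) b (y div lam ^ (p * K)) =
          subst_iter lam z k (subst_iter lam z e b ((x * lam ^ k + jj) div lam ^ k)) ((x * lam ^ k + jj) mod lam ^ k)"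
        unfolding yd by (rule si_add[OF l0])
      also have "(x * lam ^ k + jj) div lam ^ k = x" using jj(1) by (rule dm_div)
      also have "(x * lam ^ k + jj) mod lam ^ k = jj" using jj(1) by (rule dm_mod)
      finally have "subst_iter lam z (p * (k + K + K)) b y = b"
        unfolding pN ym using x(2) jj(2) t(2) by simp
      moreover have "y < lam ^ (p * (k + K + K))" using b2 pN by (simp add: add.commute)
      moreover have "k + K + K \<ge> 1" using K(1) by simp
      ultimately show ?thesis using posb unfolding y_def by blast
    qed
    have g1: "m dvd ((x * lam ^ k + j) * lam ^ (p * K) + t)" using gen[OF j] d_def by simp
    have g2: "m dvd ((x * lam ^ k + j') * lam ^ (p * K) + t)" using gen[OF j'] d_def eq by simp
    have "int m dvd int ((x * lam ^ k + j) * lam ^ (p * K) + t) - int ((x * lam ^ k + j') * lam ^ (p * K) + t)"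
      using g1 g2 by (simp add: dvd_diff int_dvd_int_iff del: of_nat_add of_nat_mult)
    then have "int m dvd (int j - int j') * int lam ^ (p * K)"
      by (simp add: algebra_simps)
    then show "int m dvd int j - int j'" using cancel[OF cop] by blast
  qed
qed

lemma dir_B:
  assumes lam: "2 \<le> lam" and P: "Pm B lam z m"
    and p1: "1 \<le> p" "b \<in> B" "subst_iter lam z p b 0 = b"
    and r: "subst_iter lam z (p * (r + 1)) b r = b"
  shows "m dvd r"
proof -
  have l0: "0 < lam" using lam by simp
  have "subst_iter lam z (p * (r + 1)) b 0 = b" using fix0[OF l0 p1(3)] .
  moreover have "r < lam ^ (p * (r + 1))" using lt_pow[OF lam p1(1)] .
  moreover have "0 < lam ^ (p * (r + 1))" using l0 by simp
  ultimately have "int m dvd int r - int 0" using P p1(2) r unfolding Pm_def by metis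
  then show ?thesis by simp
qed

lemma height_char:
  assumes lam: "2 \<le> lam" and prim: "primitive_on B lam z"
    and ex: "\<exists>p b. p \<ge> 1 \<and> b \<in> B \<and> subst_iter lam z p b 0 = b"
  shows "height_on B lam z = (GREATEST m. m \<ge> 1 \<and> coprime m lam \<and> Pm B lam z m)"
proof -
  define Q where "Q = (\<lambda>(p::nat, b). p \<ge> 1 \<and> b \<in> B \<and> subst_iter lam z p b 0 = b)"
  obtain p b where pb: "(SOME x. Q x) = (p, b)" by (cases "SOME x. Q x") auto
  have "\<exists>x. Q x" using ex unfolding Q_def by auto
  then have "Q (SOME x. Q x)" by (rule someI_ex)
  then have p1: "1 \<le> p" "b \<in> B" "subst_iter lam z p b 0 = b" using pb unfolding Q_def by auto
  have pb': "(SOME (p, b). p \<ge> 1 \<and> b \<in> B \<and> subst_iter lam z p b 0 = b) = (p, b)"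
    using pb by (simp add: Q_def)
  define S where "S = {r. r \<ge> 1 \<and> subst_iter lam z (p * (r + 1)) b r = subst_iter lam z (p * (0 + 1)) b 0}"
  have h: "height_on B lam z = (GREATEST m. m \<ge> 1 \<and> coprime m lam \<and> m dvd Gcd S)"
    unfolding height_on_def pb' S_def by simp
  have S: "r \<in> S \<longleftrightarrow> r \<ge> 1 \<and> subst_iter lam z (p * (r + 1)) b r = b" for r
    unfolding S_def using p1 by simp
  have eq: "(\<lambda>m. m \<ge> 1 \<and> coprime m lam \<and> m dvd Gcd S) =
            (\<lambda>m. m \<ge> 1 \<and> coprime m lam \<and> Pm B lam z m)"
  proof (rule ext, rule iffI)
    fix m assume a: "m \<ge> 1 \<and> coprime m lam \<and> m dvd Gcd S"
    have "m dvd r" if "r \<ge> 1" "subst_iter lam z (p * (r + 1)) b r = b" for r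
    proof -
      have "r \<in> S" using S that by blast
      then have "Gcd S dvd r" by (rule Gcd_dvd)
      then show ?thesis using a dvd_trans by blast
    qed
    then have "Pm B lam z m" using dir_A[OF lam prim p1] a by blast
    then show "m \<ge> 1 \<and> coprime m lam \<and> Pm B lam z m" using a by blast
  next
    fix m assume a: "m \<ge> 1 \<and> coprime m lam \<and> Pm B lam z m"
    have "m dvd Gcd S"
    proof (rule Gcd_greatest)
      fix r assume "r \<in> S"
      then show "m dvd r" using dir_B[OF lam _ p1] a S by blast
    qed
    then show "m \<ge> 1 \<and> coprime m lam \<and> m dvd Gcd S" using a by blast
  qed
  show ?thesis unfolding h eq ..
qed



lemma si_pos:
  assumes "0 < lam" "i < lam ^ n"
  shows "subst_iter lam z (n + k) x (jj * lam ^ n + i) = subst_iter lam z n (subst_iter lam z k x jj) i"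
proof -
  have "subst_iter lam z (n + k) x (jj * lam ^ n + i) =
     subst_iter lam z n (subst_iter lam z k x ((jj * lam ^ n + i) div lam ^ n)) ((jj * lam ^ n + i) mod lam ^ n)"
    by (rule si_add[OF assms(1)])
  also have "(jj * lam ^ n + i) div lam ^ n = jj" by (rule dm_div[OF assms(2)])
  also have "(jj * lam ^ n + i) mod lam ^ n = i" by (rule dm_mod[OF assms(2)])
  finally show ?thesis .
qed

lemma Theta_iter:
  "subst_iter lam (Theta th) k (a, M) j = (subst_iter lam th k a j, (\<lambda>x. subst_iter lam th k x j) ` M)"
  by (induction k arbitrary: j) (simp_all add: Theta_def theta_tilde_def image_image)

lemma cc_fin:
  fixes th :: "'a::finite \<Rightarrow> nat \<Rightarrow> 'a"
  shows "finite {card ((\<lambda>a. subst_iter lam th k a j) ` UNIV) | k j. k \<ge> 1 \<and> j < lam ^ k}"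
  (is "finite ?S")
proof (rule finite_subset[where B="{..card (UNIV::'a set)}"])
  show "?S \<subseteq> {..card (UNIV::'a set)}"
  proof
    fix x assume "x \<in> ?S"
    then obtain k j where "x = card ((\<lambda>a. subst_iter lam th k a j) ` (UNIV::'a set))" by blast
    moreover have "card ((\<lambda>a. subst_iter lam th k a j) ` (UNIV::'a set)) \<le> card (UNIV::'a set)"
      by (rule card_mono) auto
    ultimately show "x \<in> {..card (UNIV::'a set)}" by simp
  qed
qed simp

lemma cc_le:
  fixes th :: "'a::finite \<Rightarrow> nat \<Rightarrow> 'a"
  assumes "1 \<le> k" "j < lam ^ k"
  shows "col_card lam th \<le> card (range (\<lambda>a. subst_iter lam th k a j))"
  unfolding col_card_def by (rule Min_le[OF cc_fin]) (use assms in blast)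

lemma cc_ex:
  fixes th :: "'a::finite \<Rightarrow> nat \<Rightarrow> 'a"
  assumes "0 < lam"
  shows "\<exists>k j. 1 \<le> k \<and> j < lam ^ k \<and> card (range (\<lambda>a. subst_iter lam th k a j)) = col_card lam th"
proof -
  have ne: "{card ((\<lambda>a. subst_iter lam th k a j) ` UNIV) | k j. k \<ge> 1 \<and> j < lam ^ k} \<noteq> {}"
  proof -
    have "(0::nat) < lam ^ 1" using assms by simp
    then have "card ((\<lambda>a. subst_iter lam th 1 a 0) ` UNIV) \<in>
       {card ((\<lambda>a. subst_iter lam th k a j) ` UNIV) | k j. k \<ge> 1 \<and> j < lam ^ k}" by blast
    then show ?thesis by blast
  qed
  have "col_card lam th \<in> {card ((\<lambda>a. subst_iter lam th k a j) ` UNIV) | k j. k \<ge> 1 \<and> j < lam ^ k}"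
    unfolding col_card_def by (rule Min_in[OF cc_fin ne])
  then have "\<exists>k j. col_card lam th = card (range (\<lambda>a. subst_iter lam th k a j)) \<and> 1 \<le> k \<and> j < lam ^ k"
    by (simp only: mem_Collect_eq)
  then obtain k j where h: "col_card lam th = card (range (\<lambda>a. subst_iter lam th k a j))" "1 \<le> k" "j < lam ^ k"
    by blast
  show ?thesis using h by (intro exI[of _ k] exI[of _ j]) simp
qed

lemma Xcal_card: "M \<in> Xcal lam th \<Longrightarrow> card M = col_card lam th"
  by (simp add: Xcal_def)

lemma Xcal_ne:
  fixes th :: "'a::finite \<Rightarrow> nat \<Rightarrow> 'a"
  assumes "0 < lam"
  shows "\<exists>M. M \<in> Xcal lam th"
proof -
  obtain k j where kj: "1 \<le> k" "j < lam ^ k" "card (range (\<lambda>a. subst_iter lam th k a j)) = col_card lam th"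
    using cc_ex[OF assms] by blast
  then have "range (\<lambda>a. subst_iter lam th k a j) \<in> Xcal lam th" unfolding Xcal_def by blast
  then show ?thesis by blast
qed

lemma X1:
  fixes th :: "'a::finite \<Rightarrow> nat \<Rightarrow> 'a"
  assumes l0: "0 < lam" and M: "M \<in> Xcal lam th" and j: "j < lam ^ k"
  shows "(\<lambda>a. subst_iter lam th k a j) ` M \<in> Xcal lam th"
proof -
  from M obtain n i where n: "n \<ge> 1" "i < lam ^ n" "M = range (\<lambda>b. subst_iter lam th n b i)"
    and cM: "card M = col_card lam th" unfolding Xcal_def by blast
  have pt: "subst_iter lam th (k + n) b (i * lam ^ k + j) = subst_iter lam th k (subst_iter lam th n b i) j" for b
    by (rule si_pos[OF l0 j])
  have eqT: "(\<lambda>a. subst_iter lam th k a j) ` M = range (\<lambda>b. subst_iter lam th (k + n) b (i * lam ^ k + j))"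
    unfolding n(3) image_image pt ..
  have idx: "i * lam ^ k + j < lam ^ (k + n)"
    using idx_bound[OF n(2) j] by (simp add: add.commute)
  have kn: "k + n \<ge> 1" using n(1) by simp
  have c1: "card ((\<lambda>a. subst_iter lam th k a j) ` M) \<le> col_card lam th"
    using card_image_le[of M "\<lambda>a. subst_iter lam th k a j"] cM by simp
  have c2: "col_card lam th \<le> card ((\<lambda>a. subst_iter lam th k a j) ` M)"
    unfolding eqT by (rule cc_le[OF kn idx])
  have ce: "card ((\<lambda>a. subst_iter lam th k a j) ` M) = col_card lam th" using c1 c2 by simp
  show ?thesis unfolding Xcal_def using ce eqT idx kn by blast
qed

lemma X2:
  fixes th :: "'a::finite \<Rightarrow> nat \<Rightarrow> 'a"
  assumes l0: "0 < lam" and N: "N \<in> Xcal lam th" "N = range (\<lambda>b. subst_iter lam th n b i)"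
    and i: "i < lam ^ n" and M: "M \<in> Xcal lam th"
  shows "(\<lambda>a. subst_iter lam th n a i) ` M = N"
proof (rule card_subset_eq)
  show "finite N" by simp
  show "(\<lambda>a. subst_iter lam th n a i) ` M \<subseteq> N" unfolding N(2) by blast
  have "card ((\<lambda>a. subst_iter lam th n a i) ` M) = col_card lam th" by (rule Xcal_card[OF X1[OF l0 M i]])
  also have "\<dots> = card N" by (rule Xcal_card[OF N(1), symmetric])
  finally show "card ((\<lambda>a. subst_iter lam th n a i) ` M) = card N" .
qed

lemma cover:
  fixes th :: "'a::finite \<Rightarrow> nat \<Rightarrow> 'a"
  assumes l0: "0 < lam" and prim: "primitive_on UNIV lam th"
  shows "\<exists>M\<in>Xcal lam th. c \<in> M"
proof -
  obtain M0 where M0: "M0 \<in> Xcal lam th" using Xcal_ne[OF l0] by blast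
  then obtain n i where "M0 = range (\<lambda>b. subst_iter lam th n b i)" unfolding Xcal_def by blast
  then have x: "subst_iter lam th n undefined i \<in> M0" by simp
  have "\<exists>k\<ge>1. \<forall>a\<in>UNIV. \<forall>b\<in>UNIV. \<exists>j<lam ^ k. subst_iter lam th k a j = b"
    using prim unfolding primitive_on_def by (rule conjunct2)
  then obtain K where K2: "\<forall>a\<in>UNIV. \<forall>b\<in>UNIV. \<exists>j<lam ^ K. subst_iter lam th K a j = b"
    by blast
  obtain q where q: "q < lam ^ K" "subst_iter lam th K (subst_iter lam th n undefined i) q = c"
    using K2[rule_format, OF UNIV_I UNIV_I] by blast
  have "(\<lambda>a. subst_iter lam th K a q) ` M0 \<in> Xcal lam th" by (rule X1[OF l0 M0 q(1)])
  moreover have "c \<in> (\<lambda>a. subst_iter lam th K a q) ` M0" unfolding q(2)[symmetric] by (rule imageI[OF x])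
  ultimately show ?thesis by (rule bexI[rotated])
qed

lemma level_up:
  fixes th :: "'a::finite \<Rightarrow> nat \<Rightarrow> 'a"
  assumes l0: "0 < lam" and N: "N \<in> Xcal lam th" "N = range (\<lambda>b. subst_iter lam th n b i)"
    and n: "1 \<le> n" "i < lam ^ n" "n \<le> L"
  shows "N = range (\<lambda>b. subst_iter lam th L b i)"
proof -
  have Ln: "n + (L - n) = L" using n(3) by simp
  have pt2: "subst_iter lam th L b i = subst_iter lam th n (subst_iter lam th (L - n) b 0) i" for b
  proof -
    have "subst_iter lam th (n + (L - n)) b (0 * lam ^ n + i) =
      subst_iter lam th n (subst_iter lam th (L - n) b 0) i"
      by (rule si_pos[OF l0 n(2)])
    then show ?thesis unfolding Ln by simp
  qed
  have sub: "range (\<lambda>b. subst_iter lam th L b i) \<subseteq> N"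
  proof
    fix y assume "y \<in> range (\<lambda>b. subst_iter lam th L b i)"
    then obtain b where "y = subst_iter lam th L b i" by blast
    then have "y = subst_iter lam th n (subst_iter lam th (L - n) b 0) i" using pt2 by simp
    then show "y \<in> N" using N(2) by blast
  qed
  have "lam ^ n \<le> lam ^ L" using l0 n(3) by (intro power_increasing) auto
  then have iL: "i < lam ^ L" using n(2) by linarith
  have L1: "1 \<le> L" using n by linarith
  have c1: "col_card lam th \<le> card (range (\<lambda>b. subst_iter lam th L b i))"
    by (rule cc_le[OF L1 iL])
  have c2: "card (range (\<lambda>b. subst_iter lam th L b i)) \<le> card N"
    by (rule card_mono[OF _ sub]) simp
  have c3: "card N = col_card lam th" by (rule Xcal_card[OF N(1)])
  have "card (range (\<lambda>b. subst_iter lam th L b i)) = card N"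
    using c1 c2 c3 by linarith
  then have "range (\<lambda>b. subst_iter lam th L b i) = N"
    by (rule card_subset_eq[OF _ sub, rotated]) simp
  then show ?thesis by simp
qed

lemma uniform:
  fixes th :: "'a::finite \<Rightarrow> nat \<Rightarrow> 'a"
  assumes l0: "0 < lam"
  shows "\<exists>L\<ge>1. \<forall>N\<in>Xcal lam th. \<exists>i<lam ^ L. N = range (\<lambda>b. subst_iter lam th L b i)"
proof -
  define lv where "lv N = (SOME n. n \<ge> 1 \<and> (\<exists>i<lam ^ n. N = range (\<lambda>b. subst_iter lam th n b i)))" for N
  have lvP: "lv N \<ge> 1 \<and> (\<exists>i<lam ^ lv N. N = range (\<lambda>b. subst_iter lam th (lv N) b i))"
    if "N \<in> Xcal lam th" for N
  proof -
    have "\<exists>n. n \<ge> 1 \<and> (\<exists>i<lam ^ n. N = range (\<lambda>b. subst_iter lam th n b i))"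
      using that unfolding Xcal_def by blast
    then show ?thesis unfolding lv_def by (rule someI_ex)
  qed
  define L where "L = Max (lv ` Xcal lam th)"
  have fin: "finite (lv ` Xcal lam th)" by simp
  obtain M0 where M0: "M0 \<in> Xcal lam th" using Xcal_ne[OF l0] by blast
  have le: "lv N \<le> L" if "N \<in> Xcal lam th" for N
    unfolding L_def using fin that by (intro Max_ge) auto
  have L1: "L \<ge> 1" using lvP[OF M0] le[OF M0] by simp
  have "\<exists>i<lam ^ L. N = range (\<lambda>b. subst_iter lam th L b i)" if N: "N \<in> Xcal lam th" for N
  proof -
    obtain i where i: "i < lam ^ lv N" "N = range (\<lambda>b. subst_iter lam th (lv N) b i)" using lvP[OF N] by blast
    have "N = range (\<lambda>b. subst_iter lam th L b i)"
      by (rule level_up[OF l0 N i(2)]) (use lvP[OF N] i le[OF N] in auto)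
    moreover have "i < lam ^ L" using i(1) power_increasing[OF le[OF N], of lam] l0 by simp
    ultimately show ?thesis by blast
  qed
  then show ?thesis using L1 by (intro exI[of _ L]) simp
qed

lemma Theta_closed:
  fixes th :: "'a::finite \<Rightarrow> nat \<Rightarrow> 'a"
  assumes l0: "0 < lam"
  shows "\<forall>x\<in>Xbar lam th. \<forall>j<lam. Theta th x j \<in> Xbar lam th"
proof (intro ballI allI impI)
  fix x j assume x: "x \<in> Xbar lam th" and j: "j < lam"
  obtain a M where ax: "x = (a, M)" by (cases x)
  have aM2: "M \<in> Xcal lam th" "a \<in> M" using x unfolding ax Xbar_def by simp_all
  note aM = ax aM2
  have e: "(\<lambda>b. th b j) = (\<lambda>b. subst_iter lam th 1 b j)" using j by simp
  have "(\<lambda>b. subst_iter lam th 1 b j) ` M \<in> Xcal lam th" by (rule X1[OF l0 aM(2)]) (use j in simp)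
  then have "(\<lambda>b. th b j) ` M \<in> Xcal lam th" unfolding e .
  then show "Theta th x j \<in> Xbar lam th"
    unfolding aM(1) Theta_def theta_tilde_def Xbar_def using aM(3) by auto
qed

lemma Theta_prim:
  fixes th :: "'a::finite \<Rightarrow> nat \<Rightarrow> 'a"
  assumes l0: "0 < lam" and prim: "primitive_on UNIV lam th"
  shows "primitive_on (Xbar lam th) lam (Theta th)"
proof -
  have "\<exists>k\<ge>1. \<forall>a\<in>UNIV. \<forall>b\<in>UNIV. \<exists>j<lam ^ k. subst_iter lam th k a j = b"
    using prim unfolding primitive_on_def by (rule conjunct2)
  then obtain K where K1: "K \<ge> 1" and K2: "\<forall>a\<in>UNIV. \<forall>b\<in>UNIV. \<exists>j<lam ^ K. subst_iter lam th K a j = b"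
    by blast
  obtain L where L: "L \<ge> 1" "\<forall>N\<in>Xcal lam th. \<exists>i<lam ^ L. N = range (\<lambda>b. subst_iter lam th L b i)"
    using uniform[OF l0, of th] by (elim exE conjE) (rule that)
  have reach: "\<exists>j<lam ^ (L + K). subst_iter lam (Theta th) (L + K) x j = y"
    if x: "x \<in> Xbar lam th" and y: "y \<in> Xbar lam th" for x y
  proof -
    obtain a M where ax: "x = (a, M)" by (cases x)
    have aM2: "M \<in> Xcal lam th" using x unfolding ax Xbar_def by simp
    note aM = ax aM2
    obtain b N where bx: "y = (b, N)" by (cases y)
    have bN2: "N \<in> Xcal lam th" "b \<in> N" using y unfolding bx Xbar_def by simp_all
    note bN = bx bN2
    obtain i where i: "i < lam ^ L" "N = range (\<lambda>b. subst_iter lam th L b i)" using L(2) bN(2) by blast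
    obtain x0 where x0: "b = subst_iter lam th L x0 i" using bN(3) i(2) by blast
    obtain t where t: "t < lam ^ K" "subst_iter lam th K a t = x0" using K2[rule_format, OF UNIV_I UNIV_I] by blast
    have pt: "subst_iter lam th (L + K) c (t * lam ^ L + i) = subst_iter lam th L (subst_iter lam th K c t) i" for c
      by (rule si_pos[OF l0 i(1)])
    have idx: "t * lam ^ L + i < lam ^ (L + K)" using idx_bound[OF t(1) i(1)] by (simp add: add.commute)
    have M': "(\<lambda>c. subst_iter lam th K c t) ` M \<in> Xcal lam th" by (rule X1[OF l0 aM(2) t(1)])
    have sN: "(\<lambda>c. subst_iter lam th L (subst_iter lam th K c t) i) ` M = N"
      using X2[OF l0 bN(2) i(2) i(1) M'] by (simp add: image_image)
    have "subst_iter lam (Theta th) (L + K) x (t * lam ^ L + i) = y"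
      unfolding aM(1) Theta_iter pt using sN t(2) x0 bN(1) by simp
    then show ?thesis using idx by blast
  qed
  show ?thesis unfolding primitive_on_def
  proof (intro conjI)
    show "\<forall>a\<in>Xbar lam th. \<forall>j<lam. Theta th a j \<in> Xbar lam th" by (rule Theta_closed[OF l0])
    show "\<exists>k\<ge>1. \<forall>a\<in>Xbar lam th. \<forall>b\<in>Xbar lam th. \<exists>j<lam ^ k. subst_iter lam (Theta th) k a j = b"
      using reach L(1) by (intro exI[of _ "L + K"]) auto
  qed
qed

lemma ex_fix:
  assumes l0: "0 < lam" and fin: "finite B" and x0: "x0 \<in> B" and cl: "\<forall>a\<in>B. \<forall>j<lam. z a j \<in> B"
  shows "\<exists>p b. p \<ge> 1 \<and> b \<in> B \<and> subst_iter lam z p b 0 = b"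
proof -
  define g where "g n = subst_iter lam z n x0 0" for n
  have gB: "g n \<in> B" for n unfolding g_def by (rule si_closed[OF cl l0 x0])
  have "\<not> inj g"
  proof
    assume "inj g"
    moreover have "finite (range g)" using gB fin by (meson finite_subset image_subset_iff)
    ultimately have "finite (UNIV :: nat set)" using finite_imageD by blast
    then show False by simp
  qed
  then obtain i j where ij: "i \<noteq> j" "g i = g j" unfolding inj_def by blast
  have "\<exists>i j. i < j \<and> g i = g j"
  proof (cases "i < j")
    case True then show ?thesis using ij by blast
  next
    case False then have "j < i" using ij(1) by simp
    then show ?thesis using ij(2) by metis
  qed
  then obtain i j where ij: "i < j" "g i = g j" by blast
  have "subst_iter lam z ((j - i) + i) x0 0 =
      subst_iter lam z (j - i) (subst_iter lam z i x0 (0 div lam ^ (j - i))) (0 mod lam ^ (j - i))"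
    by (rule si_add[OF l0])
  then have "subst_iter lam z ((j - i) + i) x0 0 = subst_iter lam z (j - i) (g i) 0"
    unfolding g_def by simp
  moreover have "(j - i) + i = j" using ij(1) by simp
  ultimately have "subst_iter lam z (j - i) (g i) 0 = g i" using ij(2) unfolding g_def by simp
  then show ?thesis using gB[of i] ij(1) by (intro exI[of _ "j - i"] exI[of _ "g i"]) auto
qed

lemma E1:
  fixes th :: "'a::finite \<Rightarrow> nat \<Rightarrow> 'a"
  assumes "Pm UNIV lam th m"
  shows "Pm (Xbar lam th) lam (Theta th) m"
  unfolding Pm_def
proof (intro allI ballI impI)
  fix k x j j' assume "x \<in> Xbar lam th" "j < lam ^ k" "j' < lam ^ k"
    and eq: "subst_iter lam (Theta th) k x j = subst_iter lam (Theta th) k x j'"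
  obtain a M where x: "x = (a, M)" by (cases x)
  have "subst_iter lam th k a j = subst_iter lam th k a j'" using eq unfolding x Theta_iter by simp
  then show "int m dvd int j - int j'"
    by (rule assms[unfolded Pm_def, rule_format, OF UNIV_I \<open>j < lam ^ k\<close> \<open>j' < lam ^ k\<close>])
qed

lemma E2:
  fixes th :: "'a::finite \<Rightarrow> nat \<Rightarrow> 'a"
  assumes l0: "0 < lam" and prim: "primitive_on UNIV lam th" and cop: "coprime m lam"
    and P: "Pm (Xbar lam th) lam (Theta th) m"
  shows "Pm UNIV lam th m"
  unfolding Pm_def
proof (intro allI ballI impI)
  fix k c j j' assume j: "j < lam ^ k" and j': "j' < lam ^ k"
    and eq: "subst_iter lam th k c j = subst_iter lam th k c j'"
  from cover[OF l0 prim, of c] obtain M where M: "M \<in> Xcal lam th" "c \<in> M" ..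
  have cM: "(c, M) \<in> Xbar lam th" using M unfolding Xbar_def by simp
  define N1 where "N1 = (\<lambda>x. subst_iter lam th k x j) ` M"
  define N2 where "N2 = (\<lambda>x. subst_iter lam th k x j') ` M"
  have N1: "N1 \<in> Xcal lam th" unfolding N1_def by (rule X1[OF l0 M(1) j])
  have N2: "N2 \<in> Xcal lam th" unfolding N2_def by (rule X1[OF l0 M(1) j'])
  obtain n i where n: "n \<ge> 1" "i < lam ^ n" "N2 = range (\<lambda>b. subst_iter lam th n b i)"
    using N2 unfolding Xcal_def by blast
  have val: "subst_iter lam (Theta th) (n + k) (c, M) (jj * lam ^ n + i) =
      (subst_iter lam th n (subst_iter lam th k c jj) i,
       (\<lambda>y. subst_iter lam th n y i) ` ((\<lambda>x. subst_iter lam th k x jj) ` M))" for jj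
    unfolding Theta_iter si_pos[OF l0 n(2)] image_image ..
  have v1: "subst_iter lam (Theta th) (n + k) (c, M) (j * lam ^ n + i) =
      (subst_iter lam th n (subst_iter lam th k c j) i, N2)"
    unfolding val N1_def[symmetric] using X2[OF l0 N2 n(3) n(2) N1] by simp
  have v2: "subst_iter lam (Theta th) (n + k) (c, M) (j' * lam ^ n + i) =
      (subst_iter lam th n (subst_iter lam th k c j) i, N2)"
    unfolding val N2_def[symmetric] eq using X2[OF l0 N2 n(3) n(2) N2] by simp
  have i1: "j * lam ^ n + i < lam ^ (n + k)" using idx_bound[OF j n(2)] by (simp add: add.commute)
  have i2: "j' * lam ^ n + i < lam ^ (n + k)" using idx_bound[OF j' n(2)] by (simp add: add.commute)
  have eqv: "subst_iter lam (Theta th) (n + k) (c, M) (j * lam ^ n + i) =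
      subst_iter lam (Theta th) (n + k) (c, M) (j' * lam ^ n + i)" using v1 v2 by simp
  have "int m dvd int (j * lam ^ n + i) - int (j' * lam ^ n + i)"
    by (rule P[unfolded Pm_def, rule_format, OF cM i1 i2 eqv])
  then have "int m dvd (int j - int j') * int lam ^ n" by (simp add: algebra_simps)
  then show "int m dvd int j - int j'" using cancel[OF cop] by blast
qed

theorem mainTheorem13:
  fixes th :: "'a::finite \<Rightarrow> nat \<Rightarrow> 'a" and lam :: nat and a0 :: 'a
  assumes "lam \<ge> 2"
    and "primitive_on UNIV lam th"
    and "th a0 0 = a0"
    and "\<And>a b. (\<forall>j<lam. th a j = th b j) \<Longrightarrow> a = b"
    and "infinite (subshift lam th)"
  shows "primitive_on (Xbar lam th) lam (Theta th) \<and>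
         height_on (Xbar lam th) lam (Theta th) = height_on UNIV lam th"
proof -
  have l0: "0 < lam" using assms(1) by simp
  have PT: "primitive_on (Xbar lam th) lam (Theta th)" by (rule Theta_prim[OF l0 assms(2)])
  obtain M where M: "M \<in> Xcal lam th" using Xcal_ne[OF l0] by blast
  then obtain n i where "M = range (\<lambda>b. subst_iter lam th n b i)" unfolding Xcal_def by blast
  then have xb: "(subst_iter lam th n undefined i, M) \<in> Xbar lam th" using M unfolding Xbar_def by simp
  have fX: "finite (Xbar lam th)" by simp
  have exT: "\<exists>p b. p \<ge> 1 \<and> b \<in> Xbar lam th \<and> subst_iter lam (Theta th) p b 0 = b"
    by (rule ex_fix[OF l0 fX xb Theta_closed[OF l0]])
  have exU: "\<exists>p b. p \<ge> 1 \<and> b \<in> (UNIV :: 'a set) \<and> subst_iter lam th p b 0 = b"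
    using assms(3) l0 by (intro exI[of _ "1::nat"] exI[of _ a0]) simp
  have eq: "(\<lambda>m. m \<ge> 1 \<and> coprime m lam \<and> Pm (Xbar lam th) lam (Theta th) m) =
            (\<lambda>m. m \<ge> 1 \<and> coprime m lam \<and> Pm UNIV lam th m)"
  proof (rule ext)
    fix m
    show "(m \<ge> 1 \<and> coprime m lam \<and> Pm (Xbar lam th) lam (Theta th) m) =
          (m \<ge> 1 \<and> coprime m lam \<and> Pm UNIV lam th m)"
      using E1[of lam th m] E2[OF l0 assms(2), of m] by blast
  qed
  have "height_on (Xbar lam th) lam (Theta th) = height_on UNIV lam th"
    unfolding height_char[OF assms(1) PT exT] height_char[OF assms(1) assms(2) exU] eq ..
  then show ?thesis using PT by blast
qed

end
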